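(* Let $1\to B\to A\xrightarrow{\pi}H\to1$ be a central exact sequence of Hopf algebras such that $A$ is noetherian. If $\mathcal{HZ}(H)=k$, then $B=\mathcal{HZ}(A)$.
   Context: Hopf algebras over a field $k$, with bijective antipode. A sequence $1\to B\xrightarrow{\iota}A\xrightarrow{\pi}H\to1$ of Hopf algebra maps is exact if $\iota$ is injective, $\pi$ surjective, $\operatorname{Ker}\pi=AB^+$ ($B^+=\operatorname{Ker}\varepsilon$) and $B={}^{\mathrm{co}\,\pi}A$; it is central if $B$ is central in $A$. $\mathcal{HZ}(A)$ denotes the Hopf center of $A$, i.e. its maximal central Hopf subalgebra. *)

theory Defs
  imports Complex_Main
begin

text \<open>A formal k-linear combination of "words" (pairs or triples of vectors)
  is a list of (coefficient, word). Its value in the free k-vector space on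
  the words is the function word -> total coefficient.\<close>

definition fval :: "('k::comm_monoid_add \<times> 'w) list \<Rightarrow> 'w \<Rightarrow> 'k" where
  "fval L w = sum_list (map fst (filter (\<lambda>p. snd p = w) L))"

definition fneg :: "('k::uminus \<times> 'w) list \<Rightarrow> ('k \<times> 'w) list" where
  "fneg L = map (\<lambda>(c, w). (- c, w)) L"

text \<open>Formal sums lying in the span of the bilinearity relations (X (x) Y).\<close>
inductive tspan2 :: "('k::field \<Rightarrow> 'x::plus \<Rightarrow> 'x) \<Rightarrow> ('k \<Rightarrow> 'y::plus \<Rightarrow> 'y)
    \<Rightarrow> ('k \<times> ('x \<times> 'y)) list \<Rightarrow> bool" for sx sy where
  nil: "tspan2 sx sy []"
| app: "tspan2 sx sy L \<Longrightarrow> tspan2 sx sy M \<Longrightarrow> tspan2 sx sy (L @ M)"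
| add1: "tspan2 sx sy [(d, (x + x', y)), (- d, (x, y)), (- d, (x', y))]"
| add2: "tspan2 sx sy [(d, (x, y + y')), (- d, (x, y)), (- d, (x, y'))]"
| scl1: "tspan2 sx sy [(d, (sx c x, y)), (- (c * d), (x, y))]"
| scl2: "tspan2 sx sy [(d, (x, sy c y)), (- (c * d), (x, y))]"

text \<open>Equality of the represented elements of X (x) Y.\<close>
definition teq2 where
  "teq2 sx sy L M \<longleftrightarrow> (\<exists>R. tspan2 sx sy R \<and> fval R = fval (L @ fneg M))"

inductive tspan3 :: "('k::field \<Rightarrow> 'x::plus \<Rightarrow> 'x) \<Rightarrow> ('k \<Rightarrow> 'y::plus \<Rightarrow> 'y)
    \<Rightarrow> ('k \<Rightarrow> 'z::plus \<Rightarrow> 'z) \<Rightarrow> ('k \<times> ('x \<times> 'y \<times> 'z)) list \<Rightarrow> bool" for sx sy sz where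
  nil: "tspan3 sx sy sz []"
| app: "tspan3 sx sy sz L \<Longrightarrow> tspan3 sx sy sz M \<Longrightarrow> tspan3 sx sy sz (L @ M)"
| add1: "tspan3 sx sy sz [(d, (x + x', y, z)), (- d, (x, y, z)), (- d, (x', y, z))]"
| add2: "tspan3 sx sy sz [(d, (x, y + y', z)), (- d, (x, y, z)), (- d, (x, y', z))]"
| add3: "tspan3 sx sy sz [(d, (x, y, z + z')), (- d, (x, y, z)), (- d, (x, y, z'))]"
| scl1: "tspan3 sx sy sz [(d, (sx c x, y, z)), (- (c * d), (x, y, z))]"
| scl2: "tspan3 sx sy sz [(d, (x, sy c y, z)), (- (c * d), (x, y, z))]"
| scl3: "tspan3 sx sy sz [(d, (x, y, sz c z)), (- (c * d), (x, y, z))]"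

definition teq3 where
  "teq3 sx sy sz L M \<longleftrightarrow> (\<exists>R. tspan3 sx sy sz R \<and> fval R = fval (L @ fneg M))"

text \<open>The comultiplication of a
  is given by a representative formal sum of elements of A (x) A.\<close>
record ('k, 'a) hopf_str =
  hsc :: "'k \<Rightarrow> 'a \<Rightarrow> 'a"
  comul :: "'a \<Rightarrow> ('k \<times> ('a \<times> 'a)) list"
  counit :: "'a \<Rightarrow> 'k"
  antip :: "'a \<Rightarrow> 'a"

definition is_hopf_algebra :: "('k::field, 'a::ring_1) hopf_str \<Rightarrow> bool" where
  "is_hopf_algebra A \<longleftrightarrow>
     \<comment> \<open>k-algebra\<close>
     vector_space (hsc A) \<and>
     (\<forall>c a b. hsc A c (a * b) = hsc A c a * b \<and> hsc A c (a * b) = a * hsc A c b) \<and>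
     \<comment> \<open>comultiplication: linear, coassociative, algebra map\<close>
     (\<forall>a b. teq2 (hsc A) (hsc A) (comul A (a + b)) (comul A a @ comul A b)) \<and>
     (\<forall>c a. teq2 (hsc A) (hsc A) (comul A (hsc A c a))
                 [(c * d, w). (d, w) \<leftarrow> comul A a]) \<and>
     (\<forall>a. teq3 (hsc A) (hsc A) (hsc A)
            [(c * d, (x1, x2, y)). (c, (x, y)) \<leftarrow> comul A a, (d, (x1, x2)) \<leftarrow> comul A x]
            [(c * d, (x, y1, y2)). (c, (x, y)) \<leftarrow> comul A a, (d, (y1, y2)) \<leftarrow> comul A y]) \<and>
     (\<forall>a b. teq2 (hsc A) (hsc A) (comul A (a * b))
            [(c * d, (x * x', y * y')). (c, (x, y)) \<leftarrow> comul A a, (d, (x', y')) \<leftarrow> comul A b]) \<and>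
     teq2 (hsc A) (hsc A) (comul A 1) [(1, (1, 1))] \<and>
     \<comment> \<open>counit: linear, algebra map, counit axioms\<close>
     (\<forall>a b. counit A (a + b) = counit A a + counit A b) \<and>
     (\<forall>c a. counit A (hsc A c a) = c * counit A a) \<and>
     (\<forall>a b. counit A (a * b) = counit A a * counit A b) \<and>
     counit A 1 = 1 \<and>
     (\<forall>a. sum_list [hsc A (c * counit A x) y. (c, (x, y)) \<leftarrow> comul A a] = a) \<and>
     (\<forall>a. sum_list [hsc A (c * counit A y) x. (c, (x, y)) \<leftarrow> comul A a] = a) \<and>
     \<comment> \<open>antipode: linear, convolution inverse of the identity, bijective\<close>
     (\<forall>a b. antip A (a + b) = antip A a + antip A b) \<and>
     (\<forall>c a. antip A (hsc A c a) = hsc A c (antip A a)) \<and>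
     (\<forall>a. sum_list [hsc A c (antip A x * y). (c, (x, y)) \<leftarrow> comul A a] = hsc A (counit A a) 1) \<and>
     (\<forall>a. sum_list [hsc A c (x * antip A y). (c, (x, y)) \<leftarrow> comul A a] = hsc A (counit A a) 1) \<and>
     bij (antip A)"

text \<open>Hopf algebra maps (= bialgebra maps between Hopf algebras).\<close>
definition is_hopf_map ::
  "('k::field, 'a::ring_1) hopf_str \<Rightarrow> ('k, 'b::ring_1) hopf_str \<Rightarrow> ('a \<Rightarrow> 'b) \<Rightarrow> bool" where
  "is_hopf_map A B f \<longleftrightarrow>
     (\<forall>x y. f (x + y) = f x + f y) \<and>
     (\<forall>c x. f (hsc A c x) = hsc B c (f x)) \<and>
     (\<forall>x y. f (x * y) = f x * f y) \<and> f 1 = 1 \<and>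
     (\<forall>x. teq2 (hsc B) (hsc B) (comul B (f x)) [(c, (f y, f z)). (c, (y, z)) \<leftarrow> comul A x]) \<and>
     (\<forall>x. counit B (f x) = counit A x)"

definition center :: "'a::ring_1 set" where
  "center = {z. \<forall>x. z * x = x * z}"

definition is_hopf_subalgebra :: "('k::field, 'a::ring_1) hopf_str \<Rightarrow> 'a set \<Rightarrow> bool" where
  "is_hopf_subalgebra A C \<longleftrightarrow>
     module.subspace (hsc A) C \<and> 1 \<in> C \<and> (\<forall>x\<in>C. \<forall>y\<in>C. x * y \<in> C) \<and>
     (\<forall>x\<in>C. \<exists>L. (\<forall>(c, (y, z)) \<in> set L. y \<in> C \<and> z \<in> C) \<and> teq2 (hsc A) (hsc A) (comul A x) L) \<and>
     (\<forall>x\<in>C. antip A x \<in> C)"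

definition is_central_hopf_subalgebra :: "('k::field, 'a::ring_1) hopf_str \<Rightarrow> 'a set \<Rightarrow> bool" where
  "is_central_hopf_subalgebra A C \<longleftrightarrow> is_hopf_subalgebra A C \<and> C \<subseteq> center"

definition hopf_center :: "('k::field, 'a::ring_1) hopf_str \<Rightarrow> 'a set" where
  "hopf_center A = (THE C. is_central_hopf_subalgebra A C \<and>
                      (\<forall>D. is_central_hopf_subalgebra A D \<longrightarrow> D \<subseteq> C))"

text \<open>The base field k inside A, i.e. k1.\<close>
definition scalars :: "('k::field, 'a::ring_1) hopf_str \<Rightarrow> 'a set" where
  "scalars A = range (\<lambda>c. hsc A c 1)"

definition left_ideal :: "'a::ring_1 set \<Rightarrow> bool" where
  "left_ideal I \<longleftrightarrow> 0 \<in> I \<and> (\<forall>x\<in>I. \<forall>y\<in>I. x + y \<in> I) \<and> (\<forall>x\<in>I. - x \<in> I) \<and>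
     (\<forall>a. \<forall>x\<in>I. a * x \<in> I)"

definition right_ideal :: "'a::ring_1 set \<Rightarrow> bool" where
  "right_ideal I \<longleftrightarrow> 0 \<in> I \<and> (\<forall>x\<in>I. \<forall>y\<in>I. x + y \<in> I) \<and> (\<forall>x\<in>I. - x \<in> I) \<and>
     (\<forall>a. \<forall>x\<in>I. x * a \<in> I)"

definition noetherian_ring :: "'a::ring_1 itself \<Rightarrow> bool" where
  "noetherian_ring _ \<longleftrightarrow>
     (\<forall>I :: nat \<Rightarrow> 'a set. (\<forall>n. left_ideal (I n) \<and> I n \<subseteq> I (Suc n)) \<longrightarrow>
        (\<exists>m. \<forall>n\<ge>m. I n = I m)) \<and>
     (\<forall>I :: nat \<Rightarrow> 'a set. (\<forall>n. right_ideal (I n) \<and> I n \<subseteq> I (Suc n)) \<longrightarrow>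
        (\<exists>m. \<forall>n\<ge>m. I n = I m))"

definition left_coinv ::
  "('k::field, 'a::ring_1) hopf_str \<Rightarrow> ('k, 'h::ring_1) hopf_str \<Rightarrow> ('a \<Rightarrow> 'h) \<Rightarrow> 'a set" where
  "left_coinv A H \<pi> = {a. teq2 (hsc H) (hsc A)
       [(c, (\<pi> x, y)). (c, (x, y)) \<leftarrow> comul A a] [(1, (1, a))]}"

definition exact_seq ::
  "('k::field, 'b::ring_1) hopf_str \<Rightarrow> ('k, 'a::ring_1) hopf_str \<Rightarrow> ('k, 'h::ring_1) hopf_str
     \<Rightarrow> ('b \<Rightarrow> 'a) \<Rightarrow> ('a \<Rightarrow> 'h) \<Rightarrow> bool" where
  "exact_seq B A H \<iota> \<pi> \<longleftrightarrow>
     is_hopf_algebra B \<and> is_hopf_algebra A \<and> is_hopf_algebra H \<and>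
     is_hopf_map B A \<iota> \<and> is_hopf_map A H \<pi> \<and>
     inj \<iota> \<and> surj \<pi> \<and>
     {a. \<pi> a = 0} = module.span (hsc A) {a * \<iota> b | a b. counit B b = 0} \<and>
     range \<iota> = left_coinv A H \<pi>"

definition central_exact_seq where
  "central_exact_seq B A H \<iota> \<pi> \<longleftrightarrow> exact_seq B A H \<iota> \<pi> \<and> range \<iota> \<subseteq> center"

end

theory Submission
  imports Defs
begin



definition ev :: "('k::comm_ring_1 \<Rightarrow> 'v::ab_group_add \<Rightarrow> 'v) \<Rightarrow> ('w \<Rightarrow> 'v) \<Rightarrow> ('k \<times> 'w) list \<Rightarrow> 'v" where
  "ev sc G L = sum_list (map (\<lambda>(c, w). sc c (G w)) L)"

lemma ev_Nil[simp]: "ev sc G [] = 0" by (simp add: ev_def)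
lemma ev_Cons[simp]: "ev sc G ((c, w) # L) = sc c (G w) + ev sc G L" by (simp add: ev_def)
lemma ev_append[simp]: "ev sc G (L @ M) = ev sc G L + ev sc G M" by (simp add: ev_def)

lemma fval_Nil[simp]: "fval [] w = 0" by (simp add: fval_def)
lemma fval_Cons[simp]: "fval ((c, w0) # L) w = (if w0 = w then c else 0) + fval L w"
  by (simp add: fval_def)
lemma fval_append[simp]: "fval (L @ M) w = fval L w + fval M w" by (simp add: fval_def)
lemma fneg_Nil[simp]: "fneg [] = []" by (simp add: fneg_def)
lemma fneg_Cons[simp]: "fneg ((c, w) # L) = (- c, w) # fneg L" by (simp add: fneg_def)
lemma fneg_append[simp]: "fneg (L @ M) = fneg L @ fneg M" by (simp add: fneg_def)
lemma fval_fneg[simp]: "fval (fneg (L :: ('k::ab_group_add \<times> 'w) list)) w = - fval L w"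
  by (induction L) (auto simp: algebra_simps)

lemma module_mult: "module ((*) :: 'k::comm_ring_1 \<Rightarrow> 'k \<Rightarrow> 'k)"
  by unfold_locales (auto simp: algebra_simps)

lemma vs_module: "vector_space sc \<Longrightarrow> module sc"
  unfolding vector_space_def module_def by auto

lemma ev_fval:
  assumes "module sc" "finite W" "snd ` set L \<subseteq> W"
  shows "ev sc G L = (\<Sum>w\<in>W. sc (fval L w) (G w))"
  using assms(3)
proof (induction L)
  case Nil
  then show ?case using module.scale_zero_left[OF assms(1)] by simp
next
  case (Cons p L)
  obtain c w0 where p: "p = (c, w0)" by (cases p)
  have w0: "w0 \<in> W" using Cons.prems p by auto
  have "(\<Sum>w\<in>W. sc (fval (p # L) w) (G w)) =
        (\<Sum>w\<in>W. sc (if w0 = w then c else 0) (G w)) + (\<Sum>w\<in>W. sc (fval L w) (G w))"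
    by (simp add: p module.scale_left_distrib[OF assms(1)] sum.distrib)
  also have "(\<Sum>w\<in>W. sc (if w0 = w then c else 0) (G w)) = (\<Sum>w\<in>W. if w0 = w then sc c (G w) else 0)"
    by (rule sum.cong) (auto simp: module.scale_zero_left[OF assms(1)])
  also have "\<dots> = sc c (G w0)" using w0 assms(2) by (simp add: sum.delta)
  finally show ?case using Cons p by auto
qed

lemma ev_fval_eq:
  assumes "module sc" "fval L = fval M"
  shows "ev sc G L = ev sc G M"
proof -
  let ?W = "snd ` set L \<union> snd ` set M"
  have "ev sc G L = (\<Sum>w\<in>?W. sc (fval L w) (G w))" by (rule ev_fval[OF assms(1)]) auto
  also have "\<dots> = (\<Sum>w\<in>?W. sc (fval M w) (G w))" using assms(2) by simp
  also have "\<dots> = ev sc G M" by (rule ev_fval[OF assms(1), symmetric]) auto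
  finally show ?thesis .
qed

lemma ev_fneg: "module sc \<Longrightarrow> ev sc G (fneg L) = - ev sc G L"
  by (induction L) (auto simp: module.scale_minus_left)

lemma ev_tspan2:
  assumes m: "module sc" and R: "tspan2 sx sy R"
    and a1: "\<And>x x' y. g (x + x') y = g x y + g x' y"
    and a2: "\<And>x y y'. g x (y + y') = g x y + g x y'"
    and s1: "\<And>c x y. g (sx c x) y = sc c (g x y)"
    and s2: "\<And>c x y. g x (sy c y) = sc c (g x y)"
  shows "ev sc (\<lambda>(x, y). g x y) R = 0"
  using R
proof induction
  case (add1 d x x' y)
  then show ?case by (simp add: a1 module.scale_right_distrib[OF m] module.scale_minus_left[OF m])
next
  case (add2 d x y y')
  then show ?case by (simp add: a2 module.scale_right_distrib[OF m] module.scale_minus_left[OF m])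
next
  case (scl1 d c x y)
  then show ?case by (simp add: s1 module.scale_minus_left[OF m] module.scale_scale[OF m] mult.commute)
next
  case (scl2 d c x y)
  then show ?case by (simp add: s2 module.scale_minus_left[OF m] module.scale_scale[OF m] mult.commute)
qed auto

lemma ev_teq2:
  assumes m: "module sc" and T: "teq2 sx sy L M"
    and a1: "\<And>x x' y. g (x + x') y = g x y + g x' y"
    and a2: "\<And>x y y'. g x (y + y') = g x y + g x y'"
    and s1: "\<And>c x y. g (sx c x) y = sc c (g x y)"
    and s2: "\<And>c x y. g x (sy c y) = sc c (g x y)"
  shows "ev sc (\<lambda>(x, y). g x y) L = ev sc (\<lambda>(x, y). g x y) M"
proof -
  obtain R where R: "tspan2 sx sy R" "fval R = fval (L @ fneg M)" using T unfolding teq2_def by (elim exE conjE)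
  have "0 = ev sc (\<lambda>(x, y). g x y) R" using ev_tspan2[where g=g, OF m R(1) a1 a2 s1 s2] by (rule sym)
  also have "\<dots> = ev sc (\<lambda>(x, y). g x y) (L @ fneg M)" by (rule ev_fval_eq[OF m R(2)])
  finally have "ev sc (\<lambda>(x, y). g x y) L + - ev sc (\<lambda>(x, y). g x y) M = 0"
    by (simp add: ev_fneg[OF m])
  then show ?thesis by (simp add: eq_neg_iff_add_eq_0[symmetric])
qed

lemma ev_tspan3:
  assumes m: "module sc" and R: "tspan3 sx sy sz R"
    and a1: "\<And>x x' y z. g (x + x') y z = g x y z + g x' y z"
    and a2: "\<And>x y y' z. g x (y + y') z = g x y z + g x y' z"
    and a3: "\<And>x y z z'. g x y (z + z') = g x y z + g x y z'"
    and s1: "\<And>c x y z. g (sx c x) y z = sc c (g x y z)"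
    and s2: "\<And>c x y z. g x (sy c y) z = sc c (g x y z)"
    and s3: "\<And>c x y z. g x y (sz c z) = sc c (g x y z)"
  shows "ev sc (\<lambda>(x, y, z). g x y z) R = 0"
  using R
proof induction
  case (add1 d x x' y z)
  then show ?case by (simp add: a1 module.scale_right_distrib[OF m] module.scale_minus_left[OF m])
next
  case (add2 d x y y' z)
  then show ?case by (simp add: a2 module.scale_right_distrib[OF m] module.scale_minus_left[OF m])
next
  case (add3 d x y z z')
  then show ?case by (simp add: a3 module.scale_right_distrib[OF m] module.scale_minus_left[OF m])
next
  case (scl1 d c x y z)
  then show ?case by (simp add: s1 module.scale_minus_left[OF m] module.scale_scale[OF m] mult.commute)
next
  case (scl2 d c x y z)
  then show ?case by (simp add: s2 module.scale_minus_left[OF m] module.scale_scale[OF m] mult.commute)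
next
  case (scl3 d c x y z)
  then show ?case by (simp add: s3 module.scale_minus_left[OF m] module.scale_scale[OF m] mult.commute)
qed auto

lemma ev_teq3:
  assumes m: "module sc" and T: "teq3 sx sy sz L M"
    and a1: "\<And>x x' y z. g (x + x') y z = g x y z + g x' y z"
    and a2: "\<And>x y y' z. g x (y + y') z = g x y z + g x y' z"
    and a3: "\<And>x y z z'. g x y (z + z') = g x y z + g x y z'"
    and s1: "\<And>c x y z. g (sx c x) y z = sc c (g x y z)"
    and s2: "\<And>c x y z. g x (sy c y) z = sc c (g x y z)"
    and s3: "\<And>c x y z. g x y (sz c z) = sc c (g x y z)"
  shows "ev sc (\<lambda>(x, y, z). g x y z) L = ev sc (\<lambda>(x, y, z). g x y z) M"
proof -
  obtain R where R: "tspan3 sx sy sz R" "fval R = fval (L @ fneg M)" using T unfolding teq3_def by (elim exE conjE)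
  have "0 = ev sc (\<lambda>(x, y, z). g x y z) R" using ev_tspan3[where g=g, OF m R(1) a1 a2 a3 s1 s2 s3] by (rule sym)
  also have "\<dots> = ev sc (\<lambda>(x, y, z). g x y z) (L @ fneg M)" by (rule ev_fval_eq[OF m R(2)])
  finally have "ev sc (\<lambda>(x, y, z). g x y z) L + - ev sc (\<lambda>(x, y, z). g x y z) M = 0"
    by (simp add: ev_fneg[OF m])
  then show ?thesis by (simp add: eq_neg_iff_add_eq_0[symmetric])
qed




lemma teq2_fval: "fval L = fval M \<Longrightarrow> teq2 sx sy L M"
  unfolding teq2_def by (rule exI[of _ "[]"]) (auto intro: tspan2.nil)

lemma teq2_refl: "teq2 sx sy L L" by (rule teq2_fval) simp

lemma tspan2_fneg: "tspan2 sx sy R \<Longrightarrow> tspan2 sx sy (fneg R)"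
proof (induction rule: tspan2.induct)
  case (add1 d x x' y) show ?case using tspan2.add1[of sx sy "-d" x x' y] by simp
next
  case (add2 d x y y') show ?case using tspan2.add2[of sx sy "-d" x y y'] by simp
next
  case (scl1 d c x y) show ?case using tspan2.scl1[of sx sy "-d" c x y] by simp
next
  case (scl2 d x c y) show ?case using tspan2.scl2[of sx sy "-d" x c y] by simp
qed (auto intro: tspan2.intros)

lemma teq2_sym: "teq2 sx sy L M \<Longrightarrow> teq2 sx sy M L"
  unfolding teq2_def
  apply (elim exE conjE)
  subgoal for R by (rule exI[of _ "fneg R"]) (auto simp: tspan2_fneg fun_eq_iff)
  done

lemma teq2_trans: "teq2 sx sy L M \<Longrightarrow> teq2 sx sy M N \<Longrightarrow> teq2 sx sy L N"
  unfolding teq2_def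
  apply (elim exE conjE)
  subgoal for R1 R2 by (rule exI[of _ "R1 @ R2"]) (auto intro: tspan2.app simp: fun_eq_iff)
  done

lemma teq2_append: "teq2 sx sy L L' \<Longrightarrow> teq2 sx sy M M' \<Longrightarrow> teq2 sx sy (L @ M) (L' @ M')"
  unfolding teq2_def
  apply (elim exE conjE)
  subgoal for R1 R2 by (rule exI[of _ "R1 @ R2"]) (auto intro: tspan2.app simp: fun_eq_iff)
  done

definition smul :: "'k::times \<Rightarrow> ('k \<times> 'w) list \<Rightarrow> ('k \<times> 'w) list" where
  "smul e L = map (\<lambda>(c, w). (e * c, w)) L"

lemma smul_Nil[simp]: "smul e [] = []" by (simp add: smul_def)
lemma smul_Cons[simp]: "smul e ((c, w) # L) = (e * c, w) # smul e L" by (simp add: smul_def)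
lemma smul_append[simp]: "smul e (L @ M) = smul e L @ smul e M" by (simp add: smul_def)
lemma fval_smul[simp]: "fval (smul e (L :: ('k::comm_ring \<times> 'w) list)) w = e * fval L w"
  by (induction L) (auto simp: algebra_simps)
lemma smul_fneg[simp]: "smul e (fneg (L :: ('k::comm_ring \<times> 'w) list)) = fneg (smul e L)"
  by (induction L) auto

lemma tspan2_smul: "tspan2 sx sy R \<Longrightarrow> tspan2 sx sy (smul e R)"
proof (induction rule: tspan2.induct)
  case (add1 d x x' y) show ?case using tspan2.add1[of sx sy "e * d" x x' y] by simp
next
  case (add2 d x y y') show ?case using tspan2.add2[of sx sy "e * d" x y y'] by simp
next
  case (scl1 d c x y) show ?case using tspan2.scl1[of sx sy "e * d" c x y] by (simp add: ac_simps)
next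
  case (scl2 d x c y) show ?case using tspan2.scl2[of sx sy "e * d" x c y] by (simp add: ac_simps)
qed (auto intro: tspan2.intros)

lemma teq2_smul: "teq2 sx sy L M \<Longrightarrow> teq2 sx sy (smul e L) (smul e M)"
  unfolding teq2_def
  apply (elim exE conjE)
  subgoal for R
  proof (rule exI[of _ "smul e R"], intro conjI)
    assume R: "tspan2 sx sy R" "fval R = fval (L @ fneg M)"
    show "tspan2 sx sy (smul e R)" using R(1) by (rule tspan2_smul)
    have "\<And>w. fval R w = fval L w - fval M w" using R(2) by simp
    then show "fval (smul e R) = fval (smul e L @ fneg (smul e M))"
      by (simp add: fun_eq_iff right_diff_distrib)
  qed
  done

lemma fval_mapw: "fval (map (\<lambda>(c, w). (c, h w)) L) w = ev (*) (\<lambda>w0. if h w0 = w then 1 else 0) L"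
  by (induction L) auto

lemma fval_mapw_eq: "fval L = fval (M :: ('k::field \<times> 'w) list) \<Longrightarrow>
   fval (map (\<lambda>(c, w). (c, h w)) L) = fval (map (\<lambda>(c, w). (c, h w)) M)"
  unfolding fun_eq_iff fval_mapw by (auto intro: ev_fval_eq[OF module_mult])

lemma tspan2_map:
  assumes f1: "\<And>x x'. f (x + x') = f x + f x'" and f2: "\<And>c x. f (sx c x) = sx' c (f x)"
    and g1: "\<And>y y'. g (y + y') = g y + g y'" and g2: "\<And>c y. g (sy c y) = sy' c (g y)"
  shows "tspan2 sx sy R \<Longrightarrow> tspan2 sx' sy' (map (\<lambda>(c, x, y). (c, f x, g y)) R)"
proof (induction rule: tspan2.induct)
  case (add1 d x x' y) show ?case using tspan2.add1[of sx' sy' d "f x" "f x'" "g y"] by (simp add: f1)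
next
  case (add2 d x y y') show ?case using tspan2.add2[of sx' sy' d "f x" "g y" "g y'"] by (simp add: g1)
next
  case (scl1 d c x y) show ?case using tspan2.scl1[of sx' sy' d c "f x" "g y"] by (simp add: f2)
next
  case (scl2 d x c y) show ?case using tspan2.scl2[of sx' sy' d "f x" c "g y"] by (simp add: g2)
qed (auto intro: tspan2.intros)

lemma map_fneg: "map (\<lambda>(c, w). (c, h w)) (fneg L) = fneg (map (\<lambda>(c, w). (c, h w)) L)"
  by (induction L) auto

lemma teq2_map:
  assumes f1: "\<And>x x'. f (x + x') = f x + f x'" and f2: "\<And>c x. f (sx c x) = sx' c (f x)"
    and g1: "\<And>y y'. g (y + y') = g y + g y'" and g2: "\<And>c y. g (sy c y) = sy' c (g y)"
    and T: "teq2 sx sy L M"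
  shows "teq2 sx' sy' (map (\<lambda>(c, x, y). (c, f x, g y)) L) (map (\<lambda>(c, x, y). (c, f x, g y)) M)"
proof -
  obtain R where R: "tspan2 sx sy R" "fval R = fval (L @ fneg M)" using T unfolding teq2_def by (elim exE conjE)
  let ?h = "\<lambda>(x, y). (f x, g y)"
  have e: "\<And>K. map (\<lambda>(c, x, y). (c, f x, g y)) K = map (\<lambda>(c, w). (c, ?h w)) K"
    by (rule map_cong) auto
  have "tspan2 sx' sy' (map (\<lambda>(c, x, y). (c, f x, g y)) R)"
    by (rule tspan2_map[where f=f and g=g, OF f1 f2 g1 g2 R(1)])
  moreover have "fval (map (\<lambda>(c, w). (c, ?h w)) R) = fval (map (\<lambda>(c, w). (c, ?h w)) (L @ fneg M))"
    by (rule fval_mapw_eq[OF R(2)])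
  ultimately show ?thesis unfolding teq2_def e by (auto simp: map_fneg)
qed




lemma fval_Cons_gen: "fval (p # L) w = (if snd p = w then fst p else 0) + fval L w"
  by (cases p) simp

lemma fval_concat_Cons:
  "fval (concat (map (\<lambda>q. a q # b q) M)) w = fval (map a M) w + fval (concat (map b M)) w"
  by (induction M) (auto simp: fval_Cons_gen algebra_simps)

lemma fval_transpose:
  "fval (concat (map (\<lambda>p. map (\<lambda>q. F p q) M) L)) w = fval (concat (map (\<lambda>q. map (\<lambda>p. F p q) L) M)) w"
proof (induction L)
  case Nil then show ?case by (induction M) auto
next
  case (Cons p L)
  have "fval (concat (map (\<lambda>q. map (\<lambda>p. F p q) (p # L)) M)) w =
        fval (map (\<lambda>q. F p q) M) w + fval (concat (map (\<lambda>q. map (\<lambda>p. F p q) L) M)) w"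
    using fval_concat_Cons[of "\<lambda>q. F p q" "\<lambda>q. map (\<lambda>p. F p q) L" M w] by simp
  then show ?case using Cons by simp
qed

definition prodl :: "('k::times \<times> ('a::times \<times> 'a)) list \<Rightarrow> ('k \<times> ('a \<times> 'a)) list \<Rightarrow> ('k \<times> ('a \<times> 'a)) list" where
  "prodl L M = [(c * d, (x * x', y * y')). (c, (x, y)) \<leftarrow> L, (d, (x', y')) \<leftarrow> M]"

lemma prodl_Nil[simp]: "prodl [] M = []" by (simp add: prodl_def)

lemma map_smul_aux: "map (\<lambda>(d, w). (c * d, F w)) M = smul c (map (\<lambda>(d, w). (d, F w)) M)"
  by (induction M) auto

lemma prodl_Cons: "prodl ((c, (x, y)) # L) M =
   smul c (map (\<lambda>(d, x', y'). (d, x * x', y * y')) M) @ prodl L M"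
  using map_smul_aux[of c "\<lambda>(x', y'). (x * x', y * y')" M]
  by (simp add: prodl_def case_prod_beta')

lemma teq2_prodl_right:
  assumes m1: "\<And>c a b. sx c (a * b) = a * sx c b" and m2: "\<And>c a b. sy c (a * b) = a * sy c b"
    and T: "teq2 sx sy M M'"
  shows "teq2 sx sy (prodl (L :: ('k::field \<times> ('a::ring \<times> 'a)) list) M) (prodl L M')"
proof (induction L)
  case Nil then show ?case by (simp add: teq2_refl)
next
  case (Cons p L)
  obtain c x y where p: "p = (c, x, y)" by (cases p) auto
  have "teq2 sx sy (map (\<lambda>(d, x', y'). (d, x * x', y * y')) M) (map (\<lambda>(d, x', y'). (d, x * x', y * y')) M')"
    by (rule teq2_map[where f="\<lambda>x'. x * x'" and g="\<lambda>y'. y * y'", OF _ _ _ _ T])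
       (auto simp: distrib_left m1 m2)
  then show ?case unfolding p prodl_Cons by (intro teq2_append teq2_smul Cons)
qed

definition prodT :: "('k::times \<times> ('a::times \<times> 'a)) list \<Rightarrow> ('k \<times> ('a \<times> 'a)) list \<Rightarrow> ('k \<times> ('a \<times> 'a)) list" where
  "prodT M L = concat (map (\<lambda>(d, (x', y')). map (\<lambda>(c, (x, y)). (c * d, (x * x', y * y'))) L) M)"

lemma prodT_Nil[simp]: "prodT [] L = []" by (simp add: prodT_def)

lemma map_smul_aux2: "map (\<lambda>(c, w). (c * d, F w)) L = smul d (map (\<lambda>(c, w). (c, F w)) L)"
  for d :: "'k::comm_ring" by (induction L) (auto simp: mult.commute)

lemma prodT_Cons: "prodT ((d, (x', y')) # M) (L :: ('k::comm_ring \<times> ('a::times \<times> 'a)) list) =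
   smul d (map (\<lambda>(c, x, y). (c, x * x', y * y')) L) @ prodT M L"
  using map_smul_aux2[of d "\<lambda>(x, y). (x * x', y * y')" L]
  by (simp add: prodT_def case_prod_beta')

lemma prodl_prodT_fval: "fval (prodl L M) = fval (prodT M L)"
proof
  fix w
  let ?F = "\<lambda>p q. (case p of (c, x, y) \<Rightarrow> (case q of (d, x', y') \<Rightarrow> (c * d, (x * x', y * y'))))"
  have 1: "prodl L M = concat (map (\<lambda>p. map (\<lambda>q. ?F p q) M) L)"
    unfolding prodl_def by (rule arg_cong[where f=concat], rule map_cong) (auto split: prod.split)
  have 2: "prodT M L = concat (map (\<lambda>q. map (\<lambda>p. ?F p q) L) M)"
    unfolding prodT_def by (rule arg_cong[where f=concat], rule map_cong) (auto split: prod.split intro!: map_cong)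
  show "fval (prodl L M) w = fval (prodT M L) w" unfolding 1 2 by (rule fval_transpose)
qed

lemma teq2_prodl_left:
  assumes m1: "\<And>c a b. sx c (a * b) = sx c a * b" and m2: "\<And>c a b. sy c (a * b) = sy c a * b"
    and T: "teq2 sx sy L L'"
  shows "teq2 sx sy (prodl L M) (prodl L' (M :: ('k::field \<times> ('a::ring \<times> 'a)) list))"
proof -
  have "teq2 sx sy (prodT M L) (prodT M L')"
  proof (induction M)
    case Nil then show ?case by (simp add: teq2_refl)
  next
    case (Cons q M)
    obtain d x' y' where q: "q = (d, x', y')" by (cases q) auto
    have "teq2 sx sy (map (\<lambda>(c, x, y). (c, x * x', y * y')) L) (map (\<lambda>(c, x, y). (c, x * x', y * y')) L')"
      by (rule teq2_map[where f="\<lambda>x. x * x'" and g="\<lambda>y. y * y'", OF _ _ _ _ T])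
         (auto simp: distrib_right m1 m2)
    then show ?case unfolding q prodT_Cons by (intro teq2_append teq2_smul Cons)
  qed
  then show ?thesis
    by (meson teq2_fval teq2_trans teq2_sym prodl_prodT_fval)
qed




lemma ev_lin:
  assumes h1: "\<And>a b. h (a + b) = h a + h b" and h2: "\<And>c v. h (sc1 c v) = sc2 c (h v)"
  shows "h (ev sc1 G L) = ev sc2 (\<lambda>w. h (G w)) L"
proof -
  have h0: "h 0 = 0" using h1[of 0 0] by simp
  show ?thesis by (induction L) (auto simp: h0 h1 h2)
qed

lemma ev_add_fun: "module sc \<Longrightarrow> ev sc (\<lambda>w. G w + G' w) L = ev sc G L + ev sc G' L"
  by (induction L) (auto simp: module.scale_right_distrib ac_simps)

lemma ev_scale_fun: "module sc \<Longrightarrow> ev sc (\<lambda>w. sc e (G w)) L = sc e (ev sc G L)"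
  by (induction L) (auto simp: module.scale_right_distrib module.scale_zero_right module.scale_left_commute)

lemma ev_cong: "(\<And>w. w \<in> snd ` set L \<Longrightarrow> G w = G' w) \<Longrightarrow> ev sc G L = ev sc G' L"
  by (induction L) auto

lemma ev_smul: "module sc \<Longrightarrow> ev sc G (smul e L) = sc e (ev sc G L)"
  by (induction L) (auto simp: module.scale_right_distrib module.scale_zero_right module.scale_scale)

lemma ev_swap: "module sc \<Longrightarrow> ev sc (\<lambda>a. ev sc (\<lambda>b. K a b) M) L = ev sc (\<lambda>b. ev sc (\<lambda>a. K a b) L) M"
proof (induction L)
  case Nil then show ?case by (induction M) (auto simp: module.scale_zero_right)
next
  case (Cons p L)
  obtain c a where p: "p = (c, a)" by (cases p)
  have "ev sc (\<lambda>b. ev sc (\<lambda>a. K a b) (p # L)) M =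
        ev sc (\<lambda>b. sc c (K a b)) M + ev sc (\<lambda>b. ev sc (\<lambda>a. K a b) L) M"
    unfolding p using ev_add_fun[OF Cons.prems, of "\<lambda>b. sc c (K a b)" "\<lambda>b. ev sc (\<lambda>a. K a b) L" M] by simp
  then show ?case using Cons by (simp add: p ev_scale_fun)
qed

lemma ev_map_mult: "module sc \<Longrightarrow> ev sc G (map (\<lambda>(d, w). (c * d, F w)) K) = sc c (ev sc (\<lambda>w. G (F w)) K)"
  by (induction K) (auto simp: module.scale_right_distrib module.scale_zero_right module.scale_scale)

lemma ev_nest_left:
  assumes "module sc"
  shows "ev sc (\<lambda>(x1, x2, y). T x1 x2 y) [(c * d, (x1, x2, y)). (c, (x, y)) \<leftarrow> L, (d, (x1, x2)) \<leftarrow> M x]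
       = ev sc (\<lambda>(x, y). ev sc (\<lambda>(x1, x2). T x1 x2 y) (M x)) L"
proof (induction L)
  case (Cons p L)
  obtain c x y where p: "p = (c, x, y)" by (cases p) auto
  show ?case using Cons
    using ev_map_mult[OF assms, of "\<lambda>(x1, x2, y). T x1 x2 y" c "\<lambda>(x1, x2). (x1, x2, y)" "M x"]
    by (simp add: p case_prod_beta')
qed simp

lemma ev_nest_right:
  assumes "module sc"
  shows "ev sc (\<lambda>(x, y1, y2). T x y1 y2) [(c * d, (x, y1, y2)). (c, (x, y)) \<leftarrow> L, (d, (y1, y2)) \<leftarrow> M y]
       = ev sc (\<lambda>(x, y). ev sc (\<lambda>(y1, y2). T x y1 y2) (M y)) L"
proof (induction L)
  case (Cons p L)
  obtain c x y where p: "p = (c, x, y)" by (cases p) auto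
  show ?case using Cons
    using ev_map_mult[OF assms, of "\<lambda>(x, y1, y2). T x y1 y2" c "\<lambda>(y1, y2). (x, y1, y2)" "M y"]
    by (simp add: p case_prod_beta')
qed simp

lemma ev_prodl:
  assumes "module sc"
  shows "ev sc (\<lambda>(u, v). G u v) (prodl L M) = ev sc (\<lambda>(x, y). ev sc (\<lambda>(x', y'). G (x * x') (y * y')) M) L"
proof (induction L)
  case (Cons p L)
  obtain c x y where p: "p = (c, x, y)" by (cases p) auto
  have e: "ev sc (\<lambda>(u, v). G u v) (map (\<lambda>(d, x', y'). (d, x * x', y * y')) M) =
      ev sc (\<lambda>(x', y'). G (x * x') (y * y')) M" by (induction M) auto
  show ?case using Cons
    by (simp add: p prodl_Cons ev_smul[OF assms] e)
qed simp

lemma ev_map: "ev sc G (map (\<lambda>(c, w). (c, F w)) K) = ev sc (\<lambda>w. G (F w)) K"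
  by (induction K) auto

lemma teq2_gen: "tspan2 sx sy (L @ fneg M) \<Longrightarrow> teq2 sx sy L M"
  unfolding teq2_def by blast

lemma teq2_collapse:
  assumes m: "module sy"
  shows "teq2 sx sy (map (\<lambda>(c, y, z). (c, sx (\<phi> y) x0, z)) L) [(1, (x0, ev sy (\<lambda>(y, z). sy (\<phi> y) z) L))]"
proof (induction L)
  case Nil
  have "tspan2 sx sy [(1, (x0, 0 + 0)), (- 1, (x0, 0)), (- 1, (x0, 0))]" by (rule tspan2.add2)
  then have "tspan2 sx sy [(1, (x0, 0)), (- 1, (x0, 0)), (- 1, (x0, 0))]" by simp
  then show ?case unfolding teq2_def
    by (intro exI[of _ "[(1, (x0, 0)), (- 1, (x0, 0)), (- 1, (x0, 0))]"]) (auto simp: fun_eq_iff)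
next
  case (Cons p L)
  obtain c y z where p: "p = (c, y, z)" by (cases p) auto
  let ?s = "ev sy (\<lambda>(y, z). sy (\<phi> y) z) L"
  have t1: "teq2 sx sy [(c, (sx (\<phi> y) x0, z))] [(\<phi> y * c, (x0, z))]"
    by (rule teq2_gen) (simp add: tspan2.scl1)
  have t2: "teq2 sx sy [(\<phi> y * c, (x0, z))] [(1, (x0, sy (\<phi> y * c) z))]"
    apply (rule teq2_sym, rule teq2_gen)
    using tspan2.scl2[of sx sy 1 x0 "\<phi> y * c" z] by simp
  have t3: "teq2 sx sy [(1, (x0, sy (\<phi> y * c) z)), (1, (x0, ?s))] [(1, (x0, sy (\<phi> y * c) z + ?s))]"
    apply (rule teq2_sym, rule teq2_gen)
    using tspan2.add2[of sx sy 1 x0 "sy (\<phi> y * c) z" ?s] by simp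
  have "teq2 sx sy ([(c, (sx (\<phi> y) x0, z))] @ map (\<lambda>(c, y, z). (c, sx (\<phi> y) x0, z)) L)
          ([(1, (x0, sy (\<phi> y * c) z))] @ [(1, (x0, ?s))])"
    by (rule teq2_append[OF teq2_trans[OF t1 t2] Cons])
  then have "teq2 sx sy (map (\<lambda>(c, y, z). (c, sx (\<phi> y) x0, z)) (p # L)) [(1, (x0, sy (\<phi> y * c) z + ?s))]"
    using teq2_trans t3 p by auto
  moreover have "sy (\<phi> y * c) z + ?s = ev sy (\<lambda>(y, z). sy (\<phi> y) z) (p # L)"
    using p by (simp add: module.scale_scale[OF m] mult.commute)
  ultimately show ?case by simp
qed




locale hopf =
  fixes A :: "('k::field, 'a::ring_1) hopf_str"
  assumes hopf: "is_hopf_algebra A"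
begin

lemma vs: "vector_space (hsc A)" using hopf unfolding is_hopf_algebra_def by (rule conjunct1)
lemma m: "module (hsc A)" using vs by (rule vs_module)

sublocale hm: module "hsc A" by (rule m)

lemmas HA = hopf[unfolded is_hopf_algebra_def]


lemma sc_ml[simp]: "hsc A c a * b = hsc A c (a * b)"
  and sc_mr[simp]: "a * hsc A c b = hsc A c (a * b)"
  using HA[THEN conjunct2, THEN conjunct1] by metis+

lemma S_add[simp]: "antip A (a + b) = antip A a + antip A b"
  and S_sc[simp]: "antip A (hsc A c a) = hsc A c (antip A a)"
  and eps_add[simp]: "counit A (a + b) = counit A a + counit A b"
  and eps_sc[simp]: "counit A (hsc A c a) = c * counit A a"
  and eps_mult[simp]: "counit A (a * b) = counit A a * counit A b"
  and eps_one[simp]: "counit A 1 = 1"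
  using HA[THEN conjunct2, THEN conjunct2, THEN conjunct2, THEN conjunct2, THEN conjunct2, THEN conjunct2, THEN conjunct2, THEN conjunct2, THEN conjunct2, THEN conjunct2, THEN conjunct2, THEN conjunct2, THEN conjunct2, THEN conjunct1] HA[THEN conjunct2, THEN conjunct2, THEN conjunct2, THEN conjunct2, THEN conjunct2, THEN conjunct2, THEN conjunct2, THEN conjunct2, THEN conjunct2, THEN conjunct2, THEN conjunct2, THEN conjunct2, THEN conjunct2, THEN conjunct2, THEN conjunct1] HA[THEN conjunct2, THEN conjunct2, THEN conjunct2, THEN conjunct2, THEN conjunct2, THEN conjunct2, THEN conjunct2, THEN conjunct1] HA[THEN conjunct2, THEN conjunct2, THEN conjunct2, THEN conjunct2, THEN conjunct2, THEN conjunct2, THEN conjunct2, THEN conjunct2, THEN conjunct1] HA[THEN conjunct2, THEN conjunct2, THEN conjunct2, THEN conjunct2, THEN conjunct2, THEN conjunct2, THEN conjunct2, THEN conjunct2, THEN conjunct2, THEN conjunct1] HA[THEN conjunct2, THEN conjunct2, THEN conjunct2, THEN conjunct2, THEN conjunct2, THEN conjunct2, THEN conjunct2, THEN conjunct2, THEN conjunct2, THEN conjunct2, THEN conjunct1] by auto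

lemma S_zero[simp]: "antip A 0 = 0" using S_add[of 0 0] by simp
lemma eps_zero[simp]: "counit A 0 = 0" using eps_sc[of 0 0] by simp

lemma D_add: "teq2 (hsc A) (hsc A) (comul A (a + b)) (comul A a @ comul A b)"
  and D_mult: "teq2 (hsc A) (hsc A) (comul A (a * b)) (prodl (comul A a) (comul A b))"
  and D_one: "teq2 (hsc A) (hsc A) (comul A 1) [(1, (1, 1))]"
  and D_sc: "teq2 (hsc A) (hsc A) (comul A (hsc A c a)) (smul c (comul A a))"
  using HA[THEN conjunct2, THEN conjunct2, THEN conjunct1] HA[THEN conjunct2, THEN conjunct2, THEN conjunct2, THEN conjunct2, THEN conjunct2, THEN conjunct1] HA[THEN conjunct2, THEN conjunct2, THEN conjunct2, THEN conjunct2, THEN conjunct2, THEN conjunct2, THEN conjunct1] HA[THEN conjunct2, THEN conjunct2, THEN conjunct2, THEN conjunct1] unfolding prodl_def smul_def by auto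

lemma coassoc: "teq3 (hsc A) (hsc A) (hsc A)
            [(c * d, (x1, x2, y)). (c, (x, y)) \<leftarrow> comul A a, (d, (x1, x2)) \<leftarrow> comul A x]
            [(c * d, (x, y1, y2)). (c, (x, y)) \<leftarrow> comul A a, (d, (y1, y2)) \<leftarrow> comul A y]"
  using HA[THEN conjunct2, THEN conjunct2, THEN conjunct2, THEN conjunct2, THEN conjunct1] by blast

lemma ev_sum_list: "ev sc G L = sum_list (map (\<lambda>(c, x, y). sc c (G (x, y))) L)"
  unfolding ev_def by (rule arg_cong[where f=sum_list]) (auto simp: case_prod_beta')

lemma counit_l: "ev (hsc A) (\<lambda>w. hsc A (counit A (fst w)) (snd w)) (comul A a) = a"
proof -
  have "sum_list [hsc A (c * counit A x) y. (c, (x, y)) \<leftarrow> comul A a] = a"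
    using HA[THEN conjunct2, THEN conjunct2, THEN conjunct2, THEN conjunct2, THEN conjunct2, THEN conjunct2, THEN conjunct2, THEN conjunct2, THEN conjunct2, THEN conjunct2, THEN conjunct2, THEN conjunct1] by blast
  then show ?thesis unfolding ev_sum_list by (simp add: case_prod_beta')
qed

lemma counit_r: "ev (hsc A) (\<lambda>w. hsc A (counit A (snd w)) (fst w)) (comul A a) = a"
proof -
  have "sum_list [hsc A (c * counit A y) x. (c, (x, y)) \<leftarrow> comul A a] = a"
    using HA[THEN conjunct2, THEN conjunct2, THEN conjunct2, THEN conjunct2, THEN conjunct2, THEN conjunct2, THEN conjunct2, THEN conjunct2, THEN conjunct2, THEN conjunct2, THEN conjunct2, THEN conjunct2, THEN conjunct1] by blast
  then show ?thesis unfolding ev_sum_list by (simp add: case_prod_beta')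
qed

lemma anti_l: "ev (hsc A) (\<lambda>w. antip A (fst w) * snd w) (comul A a) = hsc A (counit A a) 1"
proof -
  have "sum_list [hsc A c (antip A x * y). (c, (x, y)) \<leftarrow> comul A a] = hsc A (counit A a) 1"
    using HA[THEN conjunct2, THEN conjunct2, THEN conjunct2, THEN conjunct2, THEN conjunct2, THEN conjunct2, THEN conjunct2, THEN conjunct2, THEN conjunct2, THEN conjunct2, THEN conjunct2, THEN conjunct2, THEN conjunct2, THEN conjunct2, THEN conjunct2, THEN conjunct1] by blast
  then show ?thesis unfolding ev_sum_list by (simp add: case_prod_beta')
qed

lemma anti_r: "ev (hsc A) (\<lambda>w. fst w * antip A (snd w)) (comul A a) = hsc A (counit A a) 1"
proof -
  have "sum_list [hsc A c (x * antip A y). (c, (x, y)) \<leftarrow> comul A a] = hsc A (counit A a) 1"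
    using HA[THEN conjunct2, THEN conjunct2, THEN conjunct2, THEN conjunct2, THEN conjunct2, THEN conjunct2, THEN conjunct2, THEN conjunct2, THEN conjunct2, THEN conjunct2, THEN conjunct2, THEN conjunct2, THEN conjunct2, THEN conjunct2, THEN conjunct2, THEN conjunct2, THEN conjunct1] by blast
  then show ?thesis unfolding ev_sum_list by (simp add: case_prod_beta')
qed

lemma ev_add_fun'[simp]: "ev (hsc A) (\<lambda>w. G w + G' w) L = ev (hsc A) G L + ev (hsc A) G' L"
  by (rule ev_add_fun[OF m])
lemma ev_scale_fun'[simp]: "ev (hsc A) (\<lambda>w. hsc A e (G w)) L = hsc A e (ev (hsc A) G L)"
  by (rule ev_scale_fun[OF m])

lemma ev_mult_left: "ev (hsc A) G L * b = ev (hsc A) (\<lambda>w. G w * b) L"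
  by (rule ev_lin[where h="\<lambda>t. t * b"]) (auto simp: distrib_right)
lemma ev_mult_right: "b * ev (hsc A) G L = ev (hsc A) (\<lambda>w. b * G w) L"
  by (rule ev_lin[where h="\<lambda>t. b * t"]) (auto simp: distrib_left)
lemma ev_S: "antip A (ev (hsc A) G L) = ev (hsc A) (\<lambda>w. antip A (G w)) L"
  by (rule ev_lin[where h="antip A"]) auto

lemma ev_bil:
  assumes T: "teq2 (hsc A) (hsc A) L M"
    and a1: "\<And>x x' y. g (x + x') y = g x y + g x' y"
    and a2: "\<And>x y y'. g x (y + y') = g x y + g x y'"
    and s1: "\<And>c x y. g (hsc A c x) y = hsc A c (g x y)"
    and s2: "\<And>c x y. g x (hsc A c y) = hsc A c (g x y)"
  shows "ev (hsc A) (\<lambda>w. g (fst w) (snd w)) L = ev (hsc A) (\<lambda>w. g (fst w) (snd w)) M"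
  using ev_teq2[where g=g, OF m T a1 a2 s1 s2] by (simp add: case_prod_beta')

lemma coassoc_ev:
  assumes a1: "\<And>x x' y z. g (x + x') y z = g x y z + g x' y z"
    and a2: "\<And>x y y' z. g x (y + y') z = g x y z + g x y' z"
    and a3: "\<And>x y z z'. g x y (z + z') = g x y z + g x y z'"
    and s1: "\<And>c x y z. g (hsc A c x) y z = hsc A c (g x y z)"
    and s2: "\<And>c x y z. g x (hsc A c y) z = hsc A c (g x y z)"
    and s3: "\<And>c x y z. g x y (hsc A c z) = hsc A c (g x y z)"
  shows "ev (hsc A) (\<lambda>w. ev (hsc A) (\<lambda>v. g (fst v) (snd v) (snd w)) (comul A (fst w))) (comul A a) =
         ev (hsc A) (\<lambda>w. ev (hsc A) (\<lambda>v. g (fst w) (fst v) (snd v)) (comul A (snd w))) (comul A a)"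
proof -
  have "ev (hsc A) (\<lambda>(x, y, z). g x y z)
            [(c * d, (x1, x2, y)). (c, (x, y)) \<leftarrow> comul A a, (d, (x1, x2)) \<leftarrow> comul A x] =
        ev (hsc A) (\<lambda>(x, y, z). g x y z)
            [(c * d, (x, y1, y2)). (c, (x, y)) \<leftarrow> comul A a, (d, (y1, y2)) \<leftarrow> comul A y]"
    by (rule ev_teq3[where g=g, OF m coassoc a1 a2 a3 s1 s2 s3])
  then have "ev (hsc A) (\<lambda>(x, y). ev (hsc A) (\<lambda>(x1, x2). g x1 x2 y) (comul A x)) (comul A a) =
             ev (hsc A) (\<lambda>(x, y). ev (hsc A) (\<lambda>(y1, y2). g x y1 y2) (comul A y)) (comul A a)"
    unfolding ev_nest_left[OF m, where T=g] ev_nest_right[OF m, where T=g] .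
  then show ?thesis by (simp add: case_prod_beta')
qed

end




context hopf begin

abbreviation EV where "EV \<equiv> ev (hsc A)"

lemma AM: "EV (\<lambda>u. EV (\<lambda>v. antip A (fst u * fst v) * (snd u * snd v)) (comul A b)) (comul A a)
   = hsc A (counit A a * counit A b) 1"
proof -
  have "EV (\<lambda>w. antip A (fst w) * snd w) (comul A (a * b)) =
        EV (\<lambda>w. antip A (fst w) * snd w) (prodl (comul A a) (comul A b))"
    by (rule ev_bil[where g="\<lambda>p q. antip A p * q", OF D_mult]) (auto simp: distrib_left distrib_right)
  also have "\<dots> = EV (\<lambda>(x, y). EV (\<lambda>(x', y'). antip A (x * x') * (y * y')) (comul A b)) (comul A a)"
    using ev_prodl[OF m, where G="\<lambda>p q. antip A p * q"] by (simp add: case_prod_beta')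
  finally show ?thesis using anti_l[of "a * b"] by (simp add: case_prod_beta')
qed

lemma MB: "EV (\<lambda>u. EV (\<lambda>v. fst u * fst v * antip A (snd v) * antip A (snd u)) (comul A b)) (comul A a)
   = hsc A (counit A a * counit A b) 1"
proof -
  have "\<And>u. EV (\<lambda>v. fst u * fst v * antip A (snd v) * antip A (snd u)) (comul A b) =
        fst u * (EV (\<lambda>v. fst v * antip A (snd v)) (comul A b) * antip A (snd u))"
    by (simp add: ev_mult_left ev_mult_right mult.assoc)
  then have "EV (\<lambda>u. EV (\<lambda>v. fst u * fst v * antip A (snd v) * antip A (snd u)) (comul A b)) (comul A a)
      = EV (\<lambda>u. hsc A (counit A b) (fst u * antip A (snd u))) (comul A a)"
    by (simp add: anti_r)
  also have "\<dots> = hsc A (counit A b) (hsc A (counit A a) 1)" by (simp add: anti_r)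
  finally show ?thesis by (simp add: mult.commute)
qed

lemma antip_mult: "antip A (x * y) = antip A y * antip A x"
proof -
  let ?S = "antip A" and ?e = "counit A" and ?D = "comul A"
  have "x * y = EV (\<lambda>u. hsc A (?e (snd u)) (fst u)) (?D x) * EV (\<lambda>v. hsc A (?e (snd v)) (fst v)) (?D y)"
    using counit_r[of x] counit_r[of y] by simp
  also have "\<dots> = EV (\<lambda>u. EV (\<lambda>v. hsc A (?e (snd u) * ?e (snd v)) (fst u * fst v)) (?D y)) (?D x)"
    unfolding ev_mult_left unfolding ev_mult_right by (simp add: mult.commute)
  finally have s1: "?S (x * y) = EV (\<lambda>u. EV (\<lambda>v. hsc A (?e (snd u) * ?e (snd v)) (?S (fst u * fst v))) (?D y)) (?D x)"
    by (simp add: ev_S)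
  have s2: "?S (x * y) = EV (\<lambda>u. EV (\<lambda>v. ?S (fst u * fst v) *
      EV (\<lambda>u'. EV (\<lambda>v'. fst u' * fst v' * ?S (snd v') * ?S (snd u')) (?D (snd v))) (?D (snd u))) (?D y)) (?D x)"
    unfolding MB s1 by simp
  also have "\<dots> = EV (\<lambda>u. EV (\<lambda>u'. EV (\<lambda>v. EV (\<lambda>v'. ?S (fst u * fst v) * fst u' * fst v' * ?S (snd v') * ?S (snd u'))
      (?D (snd v))) (?D y)) (?D (snd u))) (?D x)"
    by (simp add: ev_mult_right mult.assoc ev_swap[OF m, of _ _ "?D y"])
  finally have s3: "?S (x * y) = \<dots>" .
  define \<Phi> where "\<Phi> a b c = EV (\<lambda>v. EV (\<lambda>v'. ?S (a * fst v) * b * fst v' * ?S (snd v') * ?S c)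
      (?D (snd v))) (?D y)" for a b c
  have "?S (x * y) = EV (\<lambda>u. EV (\<lambda>u'. \<Phi> (fst u) (fst u') (snd u')) (?D (snd u))) (?D x)"
    unfolding s3 \<Phi>_def ..
  also have "\<dots> = EV (\<lambda>w. EV (\<lambda>v. \<Phi> (fst v) (snd v) (snd w)) (?D (fst w))) (?D x)"
    by (rule coassoc_ev[symmetric]) (simp_all add: \<Phi>_def distrib_left distrib_right)
  also have "\<dots> = EV (\<lambda>w. EV (\<lambda>w'. hsc A (?e (fst w) * ?e (fst w')) (?S (snd w') * ?S (snd w))) (?D y)) (?D x)"
  proof (rule ev_cong)
    fix w
    have Phi: "\<And>a b c. \<Phi> a b c = EV (\<lambda>w'. EV (\<lambda>v'. ?S (a * fst v') * b * snd v' * ?S (snd w') * ?S c)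
        (?D (fst w'))) (?D y)"
      unfolding \<Phi>_def
      by (rule coassoc_ev[where g="\<lambda>p q r. ?S (_ * p) * _ * q * ?S r * ?S _", symmetric])
         (simp_all add: distrib_left distrib_right)
    have "EV (\<lambda>v. \<Phi> (fst v) (snd v) (snd w)) (?D (fst w)) =
          EV (\<lambda>v. EV (\<lambda>w'. EV (\<lambda>v'. ?S (fst v * fst v') * (snd v * snd v') * (?S (snd w') * ?S (snd w)))
             (?D (fst w'))) (?D y)) (?D (fst w))"
      unfolding Phi by (simp add: mult.assoc)
    also have "\<dots> = EV (\<lambda>w'. EV (\<lambda>v. EV (\<lambda>v'. ?S (fst v * fst v') * (snd v * snd v') * (?S (snd w') * ?S (snd w)))
             (?D (fst w'))) (?D (fst w))) (?D y)"
      by (rule ev_swap[OF m])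
    also have "\<dots> = EV (\<lambda>w'. EV (\<lambda>v. EV (\<lambda>v'. ?S (fst v * fst v') * (snd v * snd v'))
             (?D (fst w'))) (?D (fst w)) * (?S (snd w') * ?S (snd w))) (?D y)"
      by (simp add: ev_mult_left)
    also have "\<dots> = EV (\<lambda>w'. hsc A (?e (fst w) * ?e (fst w')) (?S (snd w') * ?S (snd w))) (?D y)"
      by (simp add: AM)
    finally show "EV (\<lambda>v. \<Phi> (fst v) (snd v) (snd w)) (?D (fst w)) = \<dots>" .
  qed
  also have "\<dots> = EV (\<lambda>w. hsc A (?e (fst w)) (EV (\<lambda>w'. hsc A (?e (fst w')) (?S (snd w'))) (?D y) * ?S (snd w))) (?D x)"
    by (simp add: ev_mult_left flip: ev_scale_fun')
  also have "\<dots> = EV (\<lambda>w. hsc A (?e (fst w)) (?S y * ?S (snd w))) (?D x)"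
    using arg_cong[OF counit_l[of y], of ?S] by (simp add: ev_S)
  also have "\<dots> = ?S y * EV (\<lambda>w. hsc A (?e (fst w)) (?S (snd w))) (?D x)"
    by (simp add: ev_mult_right)
  also have "\<dots> = ?S y * ?S x"
    using arg_cong[OF counit_l[of x], of ?S] by (simp add: ev_S)
  finally show ?thesis .
qed

end



context hopf begin

lemma ev_bil_gen:
  assumes mm: "module sc" and T: "teq2 (hsc A) (hsc A) L M"
    and a1: "\<And>x x' y. g (x + x') y = g x y + g x' y"
    and a2: "\<And>x y y'. g x (y + y') = g x y + g x y'"
    and s1: "\<And>c x y. g (hsc A c x) y = sc c (g x y)"
    and s2: "\<And>c x y. g x (hsc A c y) = sc c (g x y)"
  shows "ev sc (\<lambda>w. g (fst w) (snd w)) L = ev sc (\<lambda>w. g (fst w) (snd w)) M"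
  using ev_teq2[where g=g, OF mm T a1 a2 s1 s2] by (simp add: case_prod_beta')

lemma coassoc_ev_gen:
  assumes mm: "module sc"
    and a1: "\<And>x x' y z. g (x + x') y z = g x y z + g x' y z"
    and a2: "\<And>x y y' z. g x (y + y') z = g x y z + g x y' z"
    and a3: "\<And>x y z z'. g x y (z + z') = g x y z + g x y z'"
    and s1: "\<And>c x y z. g (hsc A c x) y z = sc c (g x y z)"
    and s2: "\<And>c x y z. g x (hsc A c y) z = sc c (g x y z)"
    and s3: "\<And>c x y z. g x y (hsc A c z) = sc c (g x y z)"
  shows "ev sc (\<lambda>w. ev sc (\<lambda>v. g (fst v) (snd v) (snd w)) (comul A (fst w))) (comul A a) =
         ev sc (\<lambda>w. ev sc (\<lambda>v. g (fst w) (fst v) (snd v)) (comul A (snd w))) (comul A a)"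
proof -
  have "ev sc (\<lambda>(x, y, z). g x y z)
            [(c * d, (x1, x2, y)). (c, (x, y)) \<leftarrow> comul A a, (d, (x1, x2)) \<leftarrow> comul A x] =
        ev sc (\<lambda>(x, y, z). g x y z)
            [(c * d, (x, y1, y2)). (c, (x, y)) \<leftarrow> comul A a, (d, (y1, y2)) \<leftarrow> comul A y]"
    by (rule ev_teq3[where g=g, OF mm coassoc a1 a2 a3 s1 s2 s3])
  then have "ev sc (\<lambda>(x, y). ev sc (\<lambda>(x1, x2). g x1 x2 y) (comul A x)) (comul A a) =
             ev sc (\<lambda>(x, y). ev sc (\<lambda>(y1, y2). g x y1 y2) (comul A y)) (comul A a)"
    unfolding ev_nest_left[OF mm, where T=g] ev_nest_right[OF mm, where T=g] .
  then show ?thesis by (simp add: case_prod_beta')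
qed

end

locale hopf_map2 = HA: hopf A + HB: hopf B
  for A :: "('k::field, 'a::ring_1) hopf_str" and B :: "('k, 'b::ring_1) hopf_str" +
  fixes f :: "'a \<Rightarrow> 'b"
  assumes hmap: "is_hopf_map A B f"
begin

lemma f_add[simp]: "f (x + y) = f x + f y"
  and f_sc[simp]: "f (hsc A c x) = hsc B c (f x)"
  and f_mult[simp]: "f (x * y) = f x * f y"
  and f_one[simp]: "f 1 = 1"
  and f_comul: "teq2 (hsc B) (hsc B) (comul B (f x)) (map (\<lambda>(c, y, z). (c, f y, f z)) (comul A x))"
  and f_eps[simp]: "counit B (f x) = counit A x"
  using hmap unfolding is_hopf_map_def by auto

lemma f_zero[simp]: "f 0 = 0" using f_add[of 0 0] by simp

lemma ev_f: "f (ev (hsc A) G L) = ev (hsc B) (\<lambda>w. f (G w)) L"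
  by (rule ev_lin) auto

lemma f_antip: "f (antip A x) = antip B (f x)"
proof -
  let ?SA = "antip A" and ?SB = "antip B" and ?eA = "counit A" and ?DA = "comul A"
  let ?EB = "ev (hsc B)"
  have mB: "module (hsc B)" by (rule HB.m)
  have "f (?SA x) = f (?SA (ev (hsc A) (\<lambda>w. hsc A (?eA (snd w)) (fst w)) (?DA x)))"
    using HA.counit_r[of x] by simp
  also have "\<dots> = ?EB (\<lambda>w. hsc B (?eA (snd w)) (f (?SA (fst w)))) (?DA x)"
    by (simp add: HA.ev_S ev_f)
  also have "\<dots> = ?EB (\<lambda>w. ?EB (\<lambda>v. f (?SA (fst w)) * f (fst v) * ?SB (f (snd v))) (?DA (snd w))) (?DA x)"
  proof (rule ev_cong)
    fix w :: "'a \<times> 'a"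
    have "?EB (\<lambda>v. fst v * ?SB (snd v)) (comul B (f (snd w))) =
          ?EB (\<lambda>v. fst v * ?SB (snd v)) (map (\<lambda>(c, y, z). (c, f y, f z)) (?DA (snd w)))"
      by (rule HB.ev_bil[where g="\<lambda>p q. p * ?SB q", OF f_comul]) (auto simp: distrib_left distrib_right)
    also have "\<dots> = ?EB (\<lambda>v. f (fst v) * ?SB (f (snd v))) (?DA (snd w))"
      using ev_map[of "hsc B" "\<lambda>v. fst v * ?SB (snd v)" "\<lambda>(y, z). (f y, f z)" "?DA (snd w)"]
      by (simp add: case_prod_beta' split_def)
    finally have e: "hsc B (?eA (snd w)) 1 = ?EB (\<lambda>v. f (fst v) * ?SB (f (snd v))) (?DA (snd w))"
      using HB.anti_r[of "f (snd w)"] by simp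
    show "hsc B (?eA (snd w)) (f (?SA (fst w))) =
          ?EB (\<lambda>v. f (?SA (fst w)) * f (fst v) * ?SB (f (snd v))) (?DA (snd w))"
      using arg_cong[OF e, of "\<lambda>t. f (?SA (fst w)) * t"] by (simp add: HB.ev_mult_right mult.assoc)
  qed
  also have "\<dots> = ?EB (\<lambda>w. ?EB (\<lambda>v. f (?SA (fst v)) * f (snd v) * ?SB (f (snd w))) (?DA (fst w))) (?DA x)"
    by (rule HA.coassoc_ev_gen[OF mB, symmetric]) (simp_all add: distrib_left distrib_right)
  also have "\<dots> = ?EB (\<lambda>w. hsc B (?eA (fst w)) (?SB (f (snd w)))) (?DA x)"
  proof (rule ev_cong)
    fix w :: "'a \<times> 'a"
    have "?EB (\<lambda>v. f (?SA (fst v)) * f (snd v) * ?SB (f (snd w))) (?DA (fst w)) =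
          f (ev (hsc A) (\<lambda>v. ?SA (fst v) * snd v) (?DA (fst w))) * ?SB (f (snd w))"
      by (subst ev_lin[where h="\<lambda>t. f t * ?SB (f (snd w))"]) (auto simp: distrib_right)
    then show "?EB (\<lambda>v. f (?SA (fst v)) * f (snd v) * ?SB (f (snd w))) (?DA (fst w)) =
          hsc B (?eA (fst w)) (?SB (f (snd w)))"
      by (simp add: HA.anti_l)
  qed
  also have "\<dots> = ?SB (f (ev (hsc A) (\<lambda>w. hsc A (?eA (fst w)) (snd w)) (?DA x)))"
    by (simp add: HB.ev_S ev_f)
  also have "\<dots> = ?SB (f x)" by (simp add: HA.counit_l)
  finally show ?thesis .
qed

end



context hopf begin

definition dsub :: "'a set \<Rightarrow> 'a set" where
  "dsub V = {x. \<exists>L. (\<forall>(c, (y, z)) \<in> set L. y \<in> V \<and> z \<in> V) \<and> teq2 (hsc A) (hsc A) (comul A x) L}"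

lemma D_zero: "teq2 (hsc A) (hsc A) (comul A 0) []"
proof -
  have "teq2 (hsc A) (hsc A) (comul A 0) (smul 0 (comul A 0))" using D_sc[of 0 0] by simp
  moreover have "teq2 (hsc A) (hsc A) (smul 0 (comul A 0)) []" by (rule teq2_fval) (simp add: fun_eq_iff)
  ultimately show ?thesis by (rule teq2_trans)
qed

lemma dsub_subspace: "hm.subspace (dsub V)"
proof (rule hm.subspaceI)
  show "0 \<in> dsub V" unfolding dsub_def by (intro CollectI exI[of _ "[]"]) (simp add: D_zero)
next
  fix x y assume "x \<in> dsub V" "y \<in> dsub V"
  then obtain L M where L: "\<forall>(c, (y, z)) \<in> set L. y \<in> V \<and> z \<in> V" "teq2 (hsc A) (hsc A) (comul A x) L"
    and M: "\<forall>(c, (y, z)) \<in> set M. y \<in> V \<and> z \<in> V" "teq2 (hsc A) (hsc A) (comul A y) M"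
    unfolding dsub_def by blast
  have "teq2 (hsc A) (hsc A) (comul A (x + y)) (L @ M)"
    using teq2_trans[OF D_add teq2_append[OF L(2) M(2)]] .
  then show "x + y \<in> dsub V" unfolding dsub_def using L(1) M(1) by (intro CollectI exI[of _ "L @ M"]) auto
next
  fix c x assume "x \<in> dsub V"
  then obtain L where L: "\<forall>(c, (y, z)) \<in> set L. y \<in> V \<and> z \<in> V" "teq2 (hsc A) (hsc A) (comul A x) L"
    unfolding dsub_def by blast
  have "teq2 (hsc A) (hsc A) (comul A (hsc A c x)) (smul c L)"
    using teq2_trans[OF D_sc teq2_smul[OF L(2)]] .
  moreover have "\<forall>(d, (y, z)) \<in> set (smul c L). y \<in> V \<and> z \<in> V"
    using L(1) by (auto simp: smul_def)
  ultimately show "hsc A c x \<in> dsub V" unfolding dsub_def by blast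
qed

lemma dsub_mono: "V \<subseteq> W \<Longrightarrow> dsub V \<subseteq> dsub W"
  unfolding dsub_def by fastforce

lemma hsub_dsub: "is_hopf_subalgebra A C \<Longrightarrow> C \<subseteq> dsub C"
  unfolding is_hopf_subalgebra_def dsub_def by blast

lemma center_subspace: "hm.subspace (center :: 'a set)"
  unfolding center_def by (rule hm.subspaceI) (auto simp: distrib_left distrib_right)

lemma antip_subspace: "hm.subspace C \<Longrightarrow> hm.subspace {x. antip A x \<in> C}"
  by (rule hm.subspaceI) (auto simp: hm.subspace_0 hm.subspace_add hm.subspace_scale)

lemma mult_span:
  assumes G: "\<And>u v. u \<in> G \<Longrightarrow> v \<in> G \<Longrightarrow> u * v \<in> hm.span G"
    and x: "x \<in> hm.span G" and y: "y \<in> hm.span G"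
  shows "x * y \<in> hm.span G"
proof -
  have base0: "u * y \<in> hm.span G" if u: "u \<in> G" and y: "y \<in> hm.span G" for u y
    using y
  proof (induction rule: hm.span_induct)
    case (step v) show ?case by (rule G[OF u step])
  next
    case base show ?case
      unfolding hm.subspace_def by (auto simp: distrib_left hm.span_zero hm.span_add hm.span_scale)
  qed
  show ?thesis using x
  proof (induction rule: hm.span_induct)
    case (step u) show ?case by (rule base0[OF step y])
  next
    case base show ?case
      unfolding hm.subspace_def by (auto simp: distrib_right hm.span_zero hm.span_add hm.span_scale y)
  qed
qed

lemma span_subset_subspace: "S \<subseteq> T \<Longrightarrow> hm.subspace T \<Longrightarrow> hm.span S \<subseteq> T"
  by (rule hm.span_minimal)

lemma hs_sub: "is_hopf_subalgebra A C \<Longrightarrow> hm.subspace C"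
  and hs_one: "is_hopf_subalgebra A C \<Longrightarrow> 1 \<in> C"
  and hs_mult: "is_hopf_subalgebra A C \<Longrightarrow> x \<in> C \<Longrightarrow> y \<in> C \<Longrightarrow> x * y \<in> C"
  and hs_antip: "is_hopf_subalgebra A C \<Longrightarrow> x \<in> C \<Longrightarrow> antip A x \<in> C"
  and hs_comul: "is_hopf_subalgebra A C \<Longrightarrow> x \<in> C \<Longrightarrow>
     \<exists>L. (\<forall>(c, (y, z)) \<in> set L. y \<in> C \<and> z \<in> C) \<and> teq2 (hsc A) (hsc A) (comul A x) L"
  unfolding is_hopf_subalgebra_def by blast+

lemma hsI:
  assumes "hm.subspace C" "1 \<in> C" "\<And>x y. x \<in> C \<Longrightarrow> y \<in> C \<Longrightarrow> x * y \<in> C"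
    "C \<subseteq> dsub C" "\<And>x. x \<in> C \<Longrightarrow> antip A x \<in> C"
  shows "is_hopf_subalgebra A C"
  using assms unfolding is_hopf_subalgebra_def dsub_def by blast

lemma centerD: "z \<in> center \<Longrightarrow> z * x = x * z"
  unfolding center_def by blast

lemma center_mult: "u \<in> center \<Longrightarrow> v \<in> center \<Longrightarrow> u * v \<in> center"
proof -
  assume u: "u \<in> center" and v: "v \<in> center"
  have "u * v * x = x * (u * v)" for x
  proof -
    have "u * v * x = u * (x * v)" by (simp add: mult.assoc centerD[OF v])
    also have "\<dots> = (x * u) * v" by (simp add: mult.assoc[symmetric] centerD[OF u])
    finally show ?thesis by (simp add: mult.assoc)
  qed
  then show ?thesis unfolding center_def by blast
qed

lemma join_central:
  assumes D1: "is_central_hopf_subalgebra A D1" and D2: "is_central_hopf_subalgebra A D2"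
  shows "is_central_hopf_subalgebra A (hm.span {u * v | u v. u \<in> D1 \<and> v \<in> D2})"
proof -
  let ?G = "{u * v | u v. u \<in> D1 \<and> v \<in> D2}"
  let ?P = "hm.span ?G"
  have h1: "is_hopf_subalgebra A D1" "D1 \<subseteq> center" and h2: "is_hopf_subalgebra A D2" "D2 \<subseteq> center"
    using D1 D2 unfolding is_central_hopf_subalgebra_def by auto
  have GP: "?G \<subseteq> ?P" by (rule hm.span_superset)
  have "(1::'a) = 1 * 1 \<and> 1 \<in> D1 \<and> 1 \<in> D2" using hs_one[OF h1(1)] hs_one[OF h2(1)] by simp
  then have "1 \<in> ?G" by blast
  then have one: "1 \<in> ?P" using GP by (rule subsetD[rotated])
  have cent: "?P \<subseteq> center"
  proof (rule span_subset_subspace[OF _ center_subspace])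
    show "?G \<subseteq> center" using h1(2) h2(2) center_mult by blast
  qed
  have mult: "x * y \<in> ?P" if "x \<in> ?P" "y \<in> ?P" for x y
  proof (rule mult_span[OF _ that])
    fix p q assume "p \<in> ?G" "q \<in> ?G"
    then obtain u v u' v' where p: "p = u * v" "u \<in> D1" "v \<in> D2" and q: "q = u' * v'" "u' \<in> D1" "v' \<in> D2" by blast
    have "v * u' = u' * v" using p(3) h2(2) centerD by blast
    then have "p * q = (u * u') * (v * v')" unfolding p q by (metis mult.assoc)
    moreover have "u * u' \<in> D1" "v * v' \<in> D2"
      using hs_mult[OF h1(1) p(2) q(2)] hs_mult[OF h2(1) p(3) q(3)] by auto
    ultimately have "p * q \<in> ?G" by blast
    then show "p * q \<in> ?P" using GP by blast
  qed
  have anti: "antip A x \<in> ?P" if x: "x \<in> ?P" for x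
  proof -
    have "x \<in> {x. antip A x \<in> ?P}"
      using x
    proof (rule hm.span_subspace_induct[OF _ antip_subspace[OF hm.subspace_span]])
      fix p assume "p \<in> ?G"
      then obtain u v where p: "p = u * v" "u \<in> D1" "v \<in> D2" by blast
      have Su: "antip A u \<in> D1" and Sv: "antip A v \<in> D2"
        using hs_antip[OF h1(1) p(2)] hs_antip[OF h2(1) p(3)] by auto
      have "antip A p = antip A v * antip A u" unfolding p by (rule antip_mult)
      also have "\<dots> = antip A u * antip A v" using Sv h2(2) centerD by blast
      finally have "antip A p \<in> ?G" using Su Sv by blast
      then show "p \<in> {x. antip A x \<in> ?P}" using GP by blast
    qed
    then show ?thesis by simp
  qed
  have dsubG: "?G \<subseteq> dsub ?P"
  proof
    fix p assume "p \<in> ?G"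
    then obtain u v where p: "p = u * v" "u \<in> D1" "v \<in> D2" by blast
    obtain Lu where Lu: "\<forall>(c, (y, z)) \<in> set Lu. y \<in> D1 \<and> z \<in> D1" "teq2 (hsc A) (hsc A) (comul A u) Lu"
      using hs_comul[OF h1(1) p(2)] by blast
    obtain Lv where Lv: "\<forall>(c, (y, z)) \<in> set Lv. y \<in> D2 \<and> z \<in> D2" "teq2 (hsc A) (hsc A) (comul A v) Lv"
      using hs_comul[OF h2(1) p(3)] by blast
    have t1: "teq2 (hsc A) (hsc A) (prodl (comul A u) (comul A v)) (prodl Lu (comul A v))"
      by (rule teq2_prodl_left[OF _ _ Lu(2)]) auto
    have t2: "teq2 (hsc A) (hsc A) (prodl Lu (comul A v)) (prodl Lu Lv)"
      by (rule teq2_prodl_right[OF _ _ Lv(2)]) auto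
    have "teq2 (hsc A) (hsc A) (comul A p) (prodl Lu Lv)"
      unfolding p(1) by (rule teq2_trans[OF D_mult teq2_trans[OF t1 t2]])
    moreover have "\<forall>(c, (y, z)) \<in> set (prodl Lu Lv). y \<in> ?P \<and> z \<in> ?P"
    proof (clarify)
      fix c y z assume "(c, y, z) \<in> set (prodl Lu Lv)"
      then obtain c1 y1 z1 c2 y2 z2 where "(c1, y1, z1) \<in> set Lu" "(c2, y2, z2) \<in> set Lv" "y = y1 * y2" "z = z1 * z2"
        unfolding prodl_def by auto
      then have "y \<in> ?G" "z \<in> ?G" using Lu(1) Lv(1) by fastforce+
      then show "y \<in> ?P \<and> z \<in> ?P" using GP by blast
    qed
    ultimately show "p \<in> dsub ?P" unfolding dsub_def by blast
  qed
  have "?P \<subseteq> dsub ?P" by (rule span_subset_subspace[OF dsubG dsub_subspace])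
  then have "is_hopf_subalgebra A ?P"
    by (intro hsI hm.subspace_span one mult anti) auto
  then show ?thesis unfolding is_central_hopf_subalgebra_def using cent by blast
qed

definition bigZ :: "'a set" where
  "bigZ = hm.span (\<Union>{D. is_central_hopf_subalgebra A D})"

lemma bigZ_central:
  assumes ex: "is_central_hopf_subalgebra A D0"
  shows "is_central_hopf_subalgebra A bigZ"
proof -
  let ?U = "\<Union>{D. is_central_hopf_subalgebra A D}"
  have UZ: "?U \<subseteq> bigZ" unfolding bigZ_def by (rule hm.span_superset)
  have D0: "is_hopf_subalgebra A D0" "D0 \<subseteq> center" using ex unfolding is_central_hopf_subalgebra_def by auto
  have "D0 \<subseteq> ?U" using ex by blast
  then have one: "1 \<in> bigZ" using hs_one[OF D0(1)] UZ by blast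
  have "?U \<subseteq> center"
  proof
    fix u assume "u \<in> ?U"
    then obtain D where "is_central_hopf_subalgebra A D" "u \<in> D" by blast
    then show "u \<in> center" unfolding is_central_hopf_subalgebra_def by blast
  qed
  then have cent: "bigZ \<subseteq> center"
    unfolding bigZ_def by (rule span_subset_subspace[OF _ center_subspace])
  have mult: "x * y \<in> bigZ" if "x \<in> bigZ" "y \<in> bigZ" for x y
    using that unfolding bigZ_def
  proof (rule mult_span[rotated])
    fix u v assume "u \<in> ?U" "v \<in> ?U"
    then obtain D1 D2 where D: "is_central_hopf_subalgebra A D1" "u \<in> D1"
      "is_central_hopf_subalgebra A D2" "v \<in> D2" by blast
    have "u * v \<in> {u * v | u v. u \<in> D1 \<and> v \<in> D2}" using D by blast
    then have "u * v \<in> hm.span {u * v | u v. u \<in> D1 \<and> v \<in> D2}" by (rule hm.span_base)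
    then have "u * v \<in> ?U" using join_central[OF D(1) D(3)] by blast
    then show "u * v \<in> hm.span ?U" by (rule hm.span_base)
  qed
  have anti: "antip A x \<in> bigZ" if x: "x \<in> bigZ" for x
  proof -
    have "x \<in> {x. antip A x \<in> hm.span ?U}" using x unfolding bigZ_def
    proof (rule hm.span_subspace_induct[OF _ antip_subspace[OF hm.subspace_span]])
      fix u assume "u \<in> ?U"
      then obtain D where D: "is_central_hopf_subalgebra A D" "u \<in> D" by blast
      then have "antip A u \<in> D" using hs_antip unfolding is_central_hopf_subalgebra_def by blast
      then have "antip A u \<in> ?U" using D(1) by blast
      then show "u \<in> {x. antip A x \<in> hm.span ?U}" by (simp add: hm.span_base)
    qed
    then show ?thesis unfolding bigZ_def by simp
  qed
  have "?U \<subseteq> dsub bigZ"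
  proof
    fix u assume "u \<in> ?U"
    then obtain D where D: "is_central_hopf_subalgebra A D" "u \<in> D" by blast
    then have "u \<in> dsub D" using hsub_dsub unfolding is_central_hopf_subalgebra_def by blast
    moreover have "D \<subseteq> bigZ" using D UZ by blast
    ultimately show "u \<in> dsub bigZ" using dsub_mono by blast
  qed
  then have dz: "bigZ \<subseteq> dsub bigZ" unfolding bigZ_def
    by (rule span_subset_subspace[OF _ dsub_subspace])
  have "is_hopf_subalgebra A bigZ"
    apply (rule hsI)
        apply (simp add: bigZ_def)
       apply (rule one)
      apply (erule (1) mult)
     apply (rule dz)
    apply (erule anti)
    done
  then show ?thesis unfolding is_central_hopf_subalgebra_def using cent by blast
qed

lemma bigZ_max: "is_central_hopf_subalgebra A D \<Longrightarrow> D \<subseteq> bigZ"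
proof -
  assume "is_central_hopf_subalgebra A D"
  then have "D \<subseteq> \<Union>{D. is_central_hopf_subalgebra A D}" by (rule Union_upper[OF CollectI])
  then show "D \<subseteq> bigZ" unfolding bigZ_def using hm.span_superset by (rule subset_trans)
qed

lemma hopf_center_eq:
  assumes ex: "is_central_hopf_subalgebra A D0"
  shows "hopf_center A = bigZ"
  unfolding hopf_center_def
proof (rule the_equality)
  show "is_central_hopf_subalgebra A bigZ \<and> (\<forall>D. is_central_hopf_subalgebra A D \<longrightarrow> D \<subseteq> bigZ)"
    using bigZ_central[OF ex] bigZ_max by simp
next
  fix C assume C: "is_central_hopf_subalgebra A C \<and> (\<forall>D. is_central_hopf_subalgebra A D \<longrightarrow> D \<subseteq> C)"
  then have "bigZ \<subseteq> C" using bigZ_central[OF ex] by simp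
  moreover have "C \<subseteq> bigZ" using C bigZ_max by simp
  ultimately show "C = bigZ" by (rule subset_antisym[rotated])
qed

lemma hopf_center_max:
  assumes "is_central_hopf_subalgebra A D"
  shows "D \<subseteq> hopf_center A"
  using hopf_center_eq[OF assms] bigZ_max[OF assms] by simp

end



lemma main_thm:
  fixes B :: "('k::field, 'b::ring_1) hopf_str"
    and A :: "('k, 'a::ring_1) hopf_str"
    and H :: "('k, 'h::ring_1) hopf_str"
    and \<iota> :: "'b \<Rightarrow> 'a" and \<pi> :: "'a \<Rightarrow> 'h"
  assumes ces: "central_exact_seq B A H \<iota> \<pi>"
    and hz: "hopf_center H = scalars H"
  shows "range \<iota> = hopf_center A"
proof -
  have ex: "exact_seq B A H \<iota> \<pi>" and cent: "range \<iota> \<subseteq> center"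
    using ces unfolding central_exact_seq_def by auto
  have hB: "is_hopf_algebra B" and hA: "is_hopf_algebra A" and hH: "is_hopf_algebra H"
    and mi: "is_hopf_map B A \<iota>" and mp: "is_hopf_map A H \<pi>"
    and sp: "surj \<pi>" and coinv: "range \<iota> = left_coinv A H \<pi>"
    using ex unfolding exact_seq_def by auto
  interpret HB: hopf B by (rule hopf.intro[OF hB])
  interpret HA: hopf A by (rule hopf.intro[OF hA])
  interpret HH: hopf H by (rule hopf.intro[OF hH])
  interpret I: hopf_map2 B A \<iota> by (intro hopf_map2.intro hopf.intro hopf_map2_axioms.intro hB hA mi)
  interpret P: hopf_map2 A H \<pi> by (intro hopf_map2.intro hopf.intro hopf_map2_axioms.intro hA hH mp)

  have R1: "is_central_hopf_subalgebra A (range \<iota>)"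
  proof -
    have "is_hopf_subalgebra A (range \<iota>)"
    proof (rule HA.hsI)
      show "HA.hm.subspace (range \<iota>)"
      proof (rule HA.hm.subspaceI)
        show "0 \<in> range \<iota>" using I.f_zero by (metis rangeI)
        show "x + y \<in> range \<iota>" if "x \<in> range \<iota>" "y \<in> range \<iota>" for x y
          using that by (auto simp flip: I.f_add)
        show "hsc A c x \<in> range \<iota>" if "x \<in> range \<iota>" for c x
          using that by (auto simp flip: I.f_sc)
      qed
      show "1 \<in> range \<iota>" using I.f_one by (metis rangeI)
      show "x * y \<in> range \<iota>" if "x \<in> range \<iota>" "y \<in> range \<iota>" for x y
        using that by (auto simp flip: I.f_mult)
      show "range \<iota> \<subseteq> HA.dsub (range \<iota>)"
      proof
        fix a assume "a \<in> range \<iota>"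
        then obtain b where a: "a = \<iota> b" by blast
        show "a \<in> HA.dsub (range \<iota>)"
          unfolding HA.dsub_def a
          by (intro CollectI exI[of _ "map (\<lambda>(c, y, z). (c, \<iota> y, \<iota> z)) (comul B b)"] conjI I.f_comul) auto
      qed
      show "antip A x \<in> range \<iota>" if "x \<in> range \<iota>" for x
        using that by (auto simp flip: I.f_antip)
    qed
    then show ?thesis unfolding is_central_hopf_subalgebra_def using cent by blast
  qed

  have R2: "D \<subseteq> range \<iota>" if D: "is_central_hopf_subalgebra A D" for D
  proof -
    have hD: "is_hopf_subalgebra A D" and cD: "D \<subseteq> center"
      using D unfolding is_central_hopf_subalgebra_def by auto
    let ?E = "\<pi> ` D"
    have E: "is_central_hopf_subalgebra H ?E"
    proof -
      have "is_hopf_subalgebra H ?E"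
      proof (rule HH.hsI)
        show "HH.hm.subspace ?E"
        proof (rule HH.hm.subspaceI)
          show "0 \<in> ?E" using P.f_zero HA.hm.subspace_0[OF HA.hs_sub[OF hD]] by (metis imageI)
          show "x + y \<in> ?E" if "x \<in> ?E" "y \<in> ?E" for x y
            using that HA.hm.subspace_add[OF HA.hs_sub[OF hD]] by (auto simp flip: P.f_add)
          show "hsc H c x \<in> ?E" if "x \<in> ?E" for c x
            using that HA.hm.subspace_scale[OF HA.hs_sub[OF hD]] by (auto simp flip: P.f_sc)
        qed
        show "1 \<in> ?E" using P.f_one HA.hs_one[OF hD] by (metis imageI)
        show "x * y \<in> ?E" if "x \<in> ?E" "y \<in> ?E" for x y
          using that HA.hs_mult[OF hD] by (auto simp flip: P.f_mult)
        show "?E \<subseteq> HH.dsub ?E"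
        proof
          fix h assume "h \<in> ?E"
          then obtain d where h: "h = \<pi> d" and d: "d \<in> D" by blast
          obtain L where L: "\<forall>(c, (y, z)) \<in> set L. y \<in> D \<and> z \<in> D" "teq2 (hsc A) (hsc A) (comul A d) L"
            using HA.hs_comul[OF hD d] by blast
          have "teq2 (hsc H) (hsc H) (map (\<lambda>(c, y, z). (c, \<pi> y, \<pi> z)) (comul A d))
                  (map (\<lambda>(c, y, z). (c, \<pi> y, \<pi> z)) L)"
            by (rule teq2_map[OF _ _ _ _ L(2)]) auto
          then have "teq2 (hsc H) (hsc H) (comul H h) (map (\<lambda>(c, y, z). (c, \<pi> y, \<pi> z)) L)"
            unfolding h by (rule teq2_trans[OF P.f_comul])
          moreover have "\<forall>(c, (y, z)) \<in> set (map (\<lambda>(c, y, z). (c, \<pi> y, \<pi> z)) L). y \<in> ?E \<and> z \<in> ?E"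
            using L(1) by auto
          ultimately show "h \<in> HH.dsub ?E" unfolding HH.dsub_def by blast
        qed
        show "antip H x \<in> ?E" if "x \<in> ?E" for x
          using that HA.hs_antip[OF hD] by (auto simp flip: P.f_antip)
      qed
      moreover have "?E \<subseteq> center"
      proof
        fix h assume "h \<in> ?E"
        then obtain d where h: "h = \<pi> d" and d: "d \<in> D" by blast
        have "h * x = x * h" for x
        proof -
          obtain a where x: "x = \<pi> a" using sp by (metis surjD)
          have "d * a = a * d" using d cD HA.centerD by blast
          then show ?thesis unfolding h x by (metis P.f_mult)
        qed
        then show "h \<in> center" unfolding center_def by blast
      qed
      ultimately show ?thesis unfolding is_central_hopf_subalgebra_def by blast
    qed
    have Esc: "?E \<subseteq> scalars H" using HH.hopf_center_max[OF E] hz by simp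
    have piD: "\<pi> y = hsc H (counit A y) 1" if y: "y \<in> D" for y
    proof -
      obtain s where s: "\<pi> y = hsc H s 1" using Esc y unfolding scalars_def by blast
      have "counit A y = s" using arg_cong[OF s, of "counit H"] by simp
      then show ?thesis using s by simp
    qed
    show "D \<subseteq> range \<iota>"
    proof
      fix d assume d: "d \<in> D"
      obtain L where L: "\<forall>(c, (y, z)) \<in> set L. y \<in> D \<and> z \<in> D" "teq2 (hsc A) (hsc A) (comul A d) L"
        using HA.hs_comul[OF hD d] by blast
      have t1: "teq2 (hsc H) (hsc A) (map (\<lambda>(c, y, z). (c, \<pi> y, z)) (comul A d))
                  (map (\<lambda>(c, y, z). (c, \<pi> y, z)) L)"
        by (rule teq2_map[where g="\<lambda>z. z", OF _ _ _ _ L(2)]) auto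
      have e: "map (\<lambda>(c, y, z). (c, \<pi> y, z)) L = map (\<lambda>(c, y, z). (c, hsc H (counit A y) 1, z)) L"
        by (rule map_cong) (use L(1) piD in auto)
      have t2: "teq2 (hsc H) (hsc A) (map (\<lambda>(c, y, z). (c, hsc H (counit A y) 1, z)) L)
                 [(1, (1, ev (hsc A) (\<lambda>(y, z). hsc A (counit A y) z) L))]"
        by (rule teq2_collapse[OF HA.m])
      have "ev (hsc A) (\<lambda>w. hsc A (counit A (fst w)) (snd w)) L =
            ev (hsc A) (\<lambda>w. hsc A (counit A (fst w)) (snd w)) (comul A d)"
        by (rule HA.ev_bil[where g="\<lambda>y z. hsc A (counit A y) z", OF teq2_sym[OF L(2)]])
           (auto simp: HA.hm.scale_right_distrib HA.hm.scale_left_distrib mult.commute)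
      then have "ev (hsc A) (\<lambda>(y, z). hsc A (counit A y) z) L = d"
        using HA.counit_l[of d] by (simp add: case_prod_beta')
      then have "teq2 (hsc H) (hsc A) (map (\<lambda>(c, y, z). (c, \<pi> y, z)) (comul A d)) [(1, (1, d))]"
        using teq2_trans[OF t1[unfolded e] t2] by simp
      then have "d \<in> left_coinv A H \<pi>" unfolding left_coinv_def by simp
      then show "d \<in> range \<iota>" using coinv by simp
    qed
  qed

  have "hopf_center A = HA.bigZ" by (rule HA.hopf_center_eq[OF R1])
  moreover have "range \<iota> \<subseteq> HA.bigZ" by (rule HA.bigZ_max[OF R1])
  moreover have "HA.bigZ \<subseteq> range \<iota>" by (rule R2[OF HA.bigZ_central[OF R1]])
  ultimately show ?thesis by simp
qed



theorem corollary2p12: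
  fixes B :: "('k::field, 'b::ring_1) hopf_str"
    and A :: "('k, 'a::ring_1) hopf_str"
    and H :: "('k, 'h::ring_1) hopf_str"
    and \<iota> :: "'b \<Rightarrow> 'a" and \<pi> :: "'a \<Rightarrow> 'h"
  assumes "central_exact_seq B A H \<iota> \<pi>"
    and "noetherian_ring TYPE('a)"
    and "hopf_center H = scalars H"
  shows "range \<iota> = hopf_center A"
  using main_thm[OF assms(1) assms(3)] .

end
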